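(* Let $(\Omega,\mathcal F,(\mathcal F_t)_{t\in[0,T]},P)$ be a filtered probability space and let $I=\{t_0,t_1,\ldots,t_n\}\subset[0,T]$ with $t_0<t_1<\cdots<t_n$; set $t_{n+1}:=T$. Let $D=(D_t)_{t\in I}$ be a family of maps $D_t:L^2(\mathcal F_T)\to L^2_+(\mathcal F_t)$ with $D_t(0)=0$. Then $D$ satisfies (D1)–(D3) for every $t\in I$ and (D5) for all $t,s\in I$ with $t\le s$ if and only if there exists a collection $(\tilde D_t)_{t\in I}$ of $\mathcal F_t$-conditional convex deviation measures such that $$D_t(X)=E\Big[\sum_{t_i\in I:\,t_i\ge t}\tilde D_{t_i}\big(E[X\mid\mathcal F_{t_{i+1}}]-E[X\mid\mathcal F_{t_i}]\big)\,\Big|\,\mathcal F_t\Big],\qquad t\in I,\ X\in L^2(\mathcal F_T).$$ In particular, if $D$ satisfies (D1)–(D3) and (D5) on $I$, this representation holds with $\tilde D_{t_i}=D_{t_i}$, $t_i\in I$.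
   Context: Equalities and inequalities between random variables hold $P$-a.s. $L^2(\mathcal F_t)$ is the space of $\mathcal F_t$-measurable square-integrable random variables; $L^2_+(\mathcal F_t)$, $L^\infty(\mathcal F_t)$ denote its non-negative and bounded elements. For a map $D_t:L^2(\mathcal F_T)\to L^2_+(\mathcal F_t)$ the properties are: (D1) $D_t(X+m)=D_t(X)$ for all $m\in L^\infty(\mathcal F_t)$; (D2) $D_t(X)\ge0$ for all $X$, and $D_t(X)=0$ iff $X$ is $\mathcal F_t$-measurable; (D3) $D_t(\lambda X+(1-\lambda)Y)\le\lambda D_t(X)+(1-\lambda)D_t(Y)$ for all $X,Y\in L^2(\mathcal F_T)$ and all $\lambda\in L^\infty(\mathcal F_t)$ with $0\le\lambda\le1$; (D5) $D_t(X)=D_t(E[X\mid\mathcal F_s])+E[D_s(X)\mid\mathcal F_t]$ for $t\le s$. An $\mathcal F_t$-conditional convex deviation measure is a map $D_t:L^2(\mathcal F_T)\to L^2_+(\mathcal F_t)$ with $D_t(0)=0$ satisfying (D1)–(D3). *)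

theory Defs
  imports "HOL-Probability.Probability"
begin

definition filtration :: "'a measure \<Rightarrow> real \<Rightarrow> (real \<Rightarrow> 'a measure) \<Rightarrow> bool" where
  "filtration M T F \<longleftrightarrow>
     (\<forall>t. 0 \<le> t \<and> t \<le> T \<longrightarrow> subalgebra M (F t)) \<and>
     (\<forall>s t. 0 \<le> s \<and> s \<le> t \<and> t \<le> T \<longrightarrow> sets (F s) \<subseteq> sets (F t))"

text \<open>Representatives of elements of L^2(G), L^2_+(G), L^infinity(G) (G a sub-sigma-algebra of M).\<close>
definition L2 :: "'a measure \<Rightarrow> 'a measure \<Rightarrow> ('a \<Rightarrow> real) set" where
  "L2 M G = {X. X \<in> borel_measurable G \<and> integrable M (\<lambda>\<omega>. (X \<omega>)\<^sup>2)}"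

definition L2_plus :: "'a measure \<Rightarrow> 'a measure \<Rightarrow> ('a \<Rightarrow> real) set" where
  "L2_plus M G = {X. X \<in> L2 M G \<and> (AE \<omega> in M. 0 \<le> X \<omega>)}"

definition Linf :: "'a measure \<Rightarrow> 'a measure \<Rightarrow> ('a \<Rightarrow> real) set" where
  "Linf M G = {X. X \<in> borel_measurable G \<and> (\<exists>C. AE \<omega> in M. \<bar>X \<omega>\<bar> \<le> C)}"

definition L2_map :: "'a measure \<Rightarrow> 'a measure \<Rightarrow> 'a measure \<Rightarrow> (('a \<Rightarrow> real) \<Rightarrow> ('a \<Rightarrow> real)) \<Rightarrow> bool" where
  "L2_map M FT G D \<longleftrightarrow>
     (\<forall>X \<in> L2 M FT. D X \<in> L2_plus M G) \<and>
     (\<forall>X \<in> L2 M FT. \<forall>Y \<in> L2 M FT. (AE \<omega> in M. X \<omega> = Y \<omega>) \<longrightarrow> (AE \<omega> in M. D X \<omega> = D Y \<omega>))"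

definition D1 :: "'a measure \<Rightarrow> 'a measure \<Rightarrow> 'a measure \<Rightarrow> (('a \<Rightarrow> real) \<Rightarrow> ('a \<Rightarrow> real)) \<Rightarrow> bool" where
  "D1 M FT G D \<longleftrightarrow>
     (\<forall>X \<in> L2 M FT. \<forall>m \<in> Linf M G. AE \<omega> in M. D (\<lambda>x. X x + m x) \<omega> = D X \<omega>)"

definition D2 :: "'a measure \<Rightarrow> 'a measure \<Rightarrow> 'a measure \<Rightarrow> (('a \<Rightarrow> real) \<Rightarrow> ('a \<Rightarrow> real)) \<Rightarrow> bool" where
  "D2 M FT G D \<longleftrightarrow>
     (\<forall>X \<in> L2 M FT. (AE \<omega> in M. 0 \<le> D X \<omega>) \<and>
        ((AE \<omega> in M. D X \<omega> = 0) \<longleftrightarrow> (\<exists>Y \<in> borel_measurable G. AE \<omega> in M. X \<omega> = Y \<omega>)))"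

definition D3 :: "'a measure \<Rightarrow> 'a measure \<Rightarrow> 'a measure \<Rightarrow> (('a \<Rightarrow> real) \<Rightarrow> ('a \<Rightarrow> real)) \<Rightarrow> bool" where
  "D3 M FT G D \<longleftrightarrow>
     (\<forall>X \<in> L2 M FT. \<forall>Y \<in> L2 M FT. \<forall>l \<in> Linf M G.
        (AE \<omega> in M. 0 \<le> l \<omega> \<and> l \<omega> \<le> 1) \<longrightarrow>
        (AE \<omega> in M. D (\<lambda>x. l x * X x + (1 - l x) * Y x) \<omega> \<le> l \<omega> * D X \<omega> + (1 - l \<omega>) * D Y \<omega>))"

definition cond_conv_dev :: "'a measure \<Rightarrow> 'a measure \<Rightarrow> 'a measure \<Rightarrow> (('a \<Rightarrow> real) \<Rightarrow> ('a \<Rightarrow> real)) \<Rightarrow> bool" where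
  "cond_conv_dev M FT G D \<longleftrightarrow>
     L2_map M FT G D \<and> (AE \<omega> in M. D (\<lambda>_. 0) \<omega> = 0) \<and> D1 M FT G D \<and> D2 M FT G D \<and> D3 M FT G D"

definition next_time :: "(nat \<Rightarrow> real) \<Rightarrow> nat \<Rightarrow> real \<Rightarrow> nat \<Rightarrow> real" where
  "next_time tt n T i = (if i < n then tt (Suc i) else T)"

definition D5 :: "'a measure \<Rightarrow> (real \<Rightarrow> 'a measure) \<Rightarrow> real \<Rightarrow> (nat \<Rightarrow> real) \<Rightarrow> nat
                   \<Rightarrow> (nat \<Rightarrow> ('a \<Rightarrow> real) \<Rightarrow> ('a \<Rightarrow> real)) \<Rightarrow> bool" where
  "D5 M F T tt n D \<longleftrightarrow>
     (\<forall>i j X. i \<le> j \<and> j \<le> n \<and> X \<in> L2 M (F T) \<longrightarrow>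
        (AE \<omega> in M. D i X \<omega> =
            D i (real_cond_exp M (F (tt j)) X) \<omega> + real_cond_exp M (F (tt i)) (D j X) \<omega>))"

end

theory Submission
  imports Defs
begin

context prob_space begin

lemma sq_le: "((a::real) + b)^2 \<le> 2*a^2 + 2*b^2"
proof -
  have "0 \<le> (a-b)^2" by simp
  then show ?thesis by (simp add: power2_eq_square algebra_simps)
qed

lemma sqint_add:
  fixes X Y :: "'a \<Rightarrow> real"
  assumes [measurable]: "X \<in> borel_measurable M" "Y \<in> borel_measurable M"
    and "integrable M (\<lambda>x. (X x)^2)" "integrable M (\<lambda>x. (Y x)^2)"
  shows "integrable M (\<lambda>x. (X x + Y x)^2)"
proof (rule Bochner_Integration.integrable_bound[where f="\<lambda>x. 2*(X x)^2 + 2*(Y x)^2"])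
  show "integrable M (\<lambda>x. 2*(X x)^2 + 2*(Y x)^2)"
    by (intro Bochner_Integration.integrable_add integrable_mult_right assms(3,4))
  have "norm ((X x + Y x)^2) \<le> norm (2*(X x)^2 + 2*(Y x)^2)" for x
  proof -
    have "norm ((X x + Y x)^2) = (X x + Y x)^2" by simp
    also have "\<dots> \<le> 2*(X x)^2 + 2*(Y x)^2" by (rule sq_le)
    also have "\<dots> = norm (2*(X x)^2 + 2*(Y x)^2)" by simp
    finally show ?thesis .
  qed
  then show "AE x in M. norm ((X x + Y x)^2) \<le> norm (2*(X x)^2 + 2*(Y x)^2)"
    by (intro AE_I2)
qed measurable

lemma sqint_mult_bdd:
  fixes X l :: "'a \<Rightarrow> real"
  assumes [measurable]: "l \<in> borel_measurable M" "X \<in> borel_measurable M"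
    and "AE x in M. \<bar>l x\<bar> \<le> C" and "integrable M (\<lambda>x. (X x)^2)"
  shows "integrable M (\<lambda>x. (l x * X x)^2)"
proof (rule Bochner_Integration.integrable_bound[where f="\<lambda>x. C^2 * (X x)^2"])
  show "integrable M (\<lambda>x. C^2 * (X x)^2)"
    by (intro integrable_mult_right assms(4))
  have *: "norm ((l x * X x)^2) \<le> norm (C^2 * (X x)^2)" if h: "\<bar>l x\<bar> \<le> C" for x
  proof -
    have "(l x)^2 = \<bar>l x\<bar>^2" by simp
    also have "\<dots> \<le> C^2" by (rule power_mono[OF h abs_ge_zero])
    finally have "(l x)^2 * (X x)^2 \<le> C^2 * (X x)^2" by (rule mult_right_mono) simp
    moreover have "norm ((l x * X x)^2) = (l x)^2 * (X x)^2"
    proof -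
      have "norm ((l x * X x)^2) = (l x * X x)^2" by simp
      also have "\<dots> = (l x)^2 * (X x)^2" by (rule power_mult_distrib)
      finally show ?thesis .
    qed
    moreover have "C^2 * (X x)^2 \<le> norm (C^2 * (X x)^2)" by (simp only: real_norm_def abs_ge_self)
    ultimately show ?thesis by linarith
  qed
  show "AE x in M. norm ((l x * X x)^2) \<le> norm (C^2 * (X x)^2)"
    using assms(3) by (rule eventually_mono) (rule *)
qed measurable

lemma sqint_bdd:
  fixes l :: "'a \<Rightarrow> real"
  assumes [measurable]: "l \<in> borel_measurable M" and "AE x in M. \<bar>l x\<bar> \<le> C"
  shows "integrable M (\<lambda>x. (l x)^2)"
proof -
  have "integrable M (\<lambda>x. (l x * 1)^2)"
  proof (rule sqint_mult_bdd[OF assms(1) _ assms(2)])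
    show "(\<lambda>x. 1::real) \<in> borel_measurable M" by (rule borel_measurable_const)
    have "integrable M (\<lambda>x. 1::real)" by (rule integrable_const)
    then show "integrable M (\<lambda>x. (1::real)^2)" by (simp only: power_one)
  qed
  then show ?thesis by (simp only: mult_1_right)
qed

lemma sqint_int:
  fixes X :: "'a \<Rightarrow> real"
  assumes "X \<in> borel_measurable M" "integrable M (\<lambda>x. (X x)^2)"
  shows "integrable M X"
  by (rule square_integrable_imp_integrable[OF assms])

lemma L2_meas: "X \<in> L2 M G \<Longrightarrow> subalgebra M G \<Longrightarrow> X \<in> borel_measurable M"
  unfolding L2_def by (auto intro: measurable_from_subalg)

lemma L2_int: "X \<in> L2 M G \<Longrightarrow> subalgebra M G \<Longrightarrow> integrable M X"
proof -
  assume a: "X \<in> L2 M G" "subalgebra M G"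
  have m: "X \<in> borel_measurable M" by (rule L2_meas[OF a])
  have s: "integrable M (\<lambda>x. (X x)^2)" using a(1) unfolding L2_def by simp
  show ?thesis by (rule sqint_int[OF m s])
qed

lemma L2_add: "X \<in> L2 M G \<Longrightarrow> Y \<in> L2 M G \<Longrightarrow> subalgebra M G \<Longrightarrow> (\<lambda>x. X x + Y x) \<in> L2 M G"
proof -
  assume a: "X \<in> L2 M G" "Y \<in> L2 M G" "subalgebra M G"
  have m: "X \<in> borel_measurable M" "Y \<in> borel_measurable M"
    by (rule L2_meas[OF a(1) a(3)], rule L2_meas[OF a(2) a(3)])
  have s: "integrable M (\<lambda>x. (X x)^2)" "integrable M (\<lambda>x. (Y x)^2)"
    using a(1,2) unfolding L2_def by simp_all
  have g: "X \<in> borel_measurable G" "Y \<in> borel_measurable G"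
    using a(1,2) unfolding L2_def by simp_all
  have "integrable M (\<lambda>x. (X x + Y x)^2)" by (rule sqint_add[OF m s])
  moreover have "(\<lambda>x. X x + Y x) \<in> borel_measurable G" using g by (rule borel_measurable_add)
  ultimately show ?thesis unfolding L2_def by simp
qed

lemma L2_cmult: "X \<in> L2 M G \<Longrightarrow> subalgebra M G \<Longrightarrow> (\<lambda>x. c * X x) \<in> L2 M G"
proof -
  assume a: "X \<in> L2 M G" "subalgebra M G"
  have m: "X \<in> borel_measurable M" by (rule L2_meas[OF a])
  have s: "integrable M (\<lambda>x. (X x)^2)" using a(1) unfolding L2_def by simp
  have g: "X \<in> borel_measurable G" using a(1) unfolding L2_def by simp
  have "integrable M (\<lambda>x. (c * X x)^2)"
    using sqint_mult_bdd[OF borel_measurable_const m _ s, of c "\<bar>c\<bar>"] by simp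
  moreover have "(\<lambda>x. c * X x) \<in> borel_measurable G" using g by (rule borel_measurable_times[OF borel_measurable_const])
  ultimately show ?thesis unfolding L2_def by simp
qed

lemma L2_uminus: "X \<in> L2 M G \<Longrightarrow> subalgebra M G \<Longrightarrow> (\<lambda>x. - X x) \<in> L2 M G"
  using L2_cmult[of X G "-1"] by simp

lemma L2_diff: "X \<in> L2 M G \<Longrightarrow> Y \<in> L2 M G \<Longrightarrow> subalgebra M G \<Longrightarrow> (\<lambda>x. X x - Y x) \<in> L2 M G"
  using L2_add[of X G "\<lambda>x. - Y x"] L2_uminus[of Y G] by simp

lemma L2_mult_bdd: "X \<in> L2 M G \<Longrightarrow> l \<in> Linf M G \<Longrightarrow> subalgebra M G \<Longrightarrow> (\<lambda>x. l x * X x) \<in> L2 M G"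
proof -
  assume a: "X \<in> L2 M G" "l \<in> Linf M G" "subalgebra M G"
  then obtain C where C: "AE x in M. \<bar>l x\<bar> \<le> C" unfolding Linf_def by auto
  have m: "l \<in> borel_measurable M" "X \<in> borel_measurable M"
    using a measurable_from_subalg[OF a(3)] unfolding Linf_def L2_def by auto
  have "integrable M (\<lambda>x. (l x * X x)^2)"
    using sqint_mult_bdd[OF m C] a(1) unfolding L2_def by simp
  moreover have "(\<lambda>x. l x * X x) \<in> borel_measurable G" using a unfolding Linf_def L2_def by auto
  ultimately show ?thesis unfolding L2_def by simp
qed

lemma L2_sum: "finite I \<Longrightarrow> (\<And>i. i \<in> I \<Longrightarrow> f i \<in> L2 M G) \<Longrightarrow> subalgebra M G \<Longrightarrow> (\<lambda>x. \<Sum>i\<in>I. f i x) \<in> L2 M G"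
proof (induction I rule: finite_induct)
  case empty
  have "(\<lambda>x. 0::real) \<in> L2 M G" unfolding L2_def by simp
  then show ?case by simp
next
  case (insert a I)
  have 1: "f a \<in> L2 M G" using insert.prems by simp
  have 2: "(\<lambda>x. \<Sum>i\<in>I. f i x) \<in> L2 M G" using insert.IH insert.prems by simp
  have "(\<lambda>x. f a x + (\<Sum>i\<in>I. f i x)) \<in> L2 M G" by (rule L2_add[OF 1 2 insert.prems(2)])
  then show ?case using insert.hyps by simp
qed

lemma L2_Linf: "l \<in> Linf M G \<Longrightarrow> subalgebra M G \<Longrightarrow> l \<in> L2 M G"
proof -
  assume a: "l \<in> Linf M G" "subalgebra M G"
  then obtain C where C: "AE x in M. \<bar>l x\<bar> \<le> C" unfolding Linf_def by auto
  have g: "l \<in> borel_measurable G" using a(1) unfolding Linf_def by simp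
  have m: "l \<in> borel_measurable M" by (rule measurable_from_subalg[OF a(2) g])
  have "integrable M (\<lambda>x. (l x)^2)" by (rule sqint_bdd[OF m C])
  then show ?thesis using g unfolding L2_def by simp
qed

lemma meas_mono: "sets G \<subseteq> sets H \<Longrightarrow> space G = space H \<Longrightarrow> f \<in> borel_measurable G \<Longrightarrow> f \<in> borel_measurable H"
  using measurable_mono[of borel borel G H] by auto

lemma L2_mono: "sets G \<subseteq> sets H \<Longrightarrow> space G = space H \<Longrightarrow> X \<in> L2 M G \<Longrightarrow> X \<in> L2 M H"
proof -
  assume a: "sets G \<subseteq> sets H" "space G = space H" "X \<in> L2 M G"
  have "X \<in> borel_measurable G" using a(3) unfolding L2_def by simp
  then have "X \<in> borel_measurable H" by (rule meas_mono[OF a(1,2)])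
  then show ?thesis using a(3) unfolding L2_def by simp
qed

lemma Linf_mono: "sets G \<subseteq> sets H \<Longrightarrow> space G = space H \<Longrightarrow> X \<in> Linf M G \<Longrightarrow> X \<in> Linf M H"
proof -
  assume a: "sets G \<subseteq> sets H" "space G = space H" "X \<in> Linf M G"
  have "X \<in> borel_measurable G" using a(3) unfolding Linf_def by simp
  then have "X \<in> borel_measurable H" by (rule meas_mono[OF a(1,2)])
  then show ?thesis using a(3) unfolding Linf_def by simp
qed

lemma L2_cexp:
  assumes "sigma_finite_subalgebra M G" "X \<in> L2 M H" "subalgebra M H"
  shows "real_cond_exp M G X \<in> L2 M G"
proof -
  have m: "X \<in> borel_measurable M" by (rule L2_meas[OF assms(2,3)])
  have i: "integrable M X" by (rule L2_int[OF assms(2,3)])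
  have s: "integrable M (\<lambda>x. (X x)^2)" using assms(2) unfolding L2_def by simp
  have "integrable M (\<lambda>x. power2 (real_cond_exp M G X x))"
    by (rule sigma_finite_subalgebra.integrable_convex_cond_exp[OF assms(1) i, of UNIV 0 0 power2])
       (simp_all add: convex_power2 s)
  then show ?thesis unfolding L2_def by simp
qed

lemma L2_plus_L2: "X \<in> L2_plus M G \<Longrightarrow> X \<in> L2 M G"
  unfolding L2_plus_def by auto

end

locale grid = prob_space M for M :: "'a measure" +
  fixes F :: "real \<Rightarrow> 'a measure" and T :: real and tt :: "nat \<Rightarrow> real" and n :: nat
  assumes filt: "filtration M T F" and t0: "0 \<le> tt 0" and tn: "tt n \<le> T"
    and incr: "\<And>i. i < n \<Longrightarrow> tt i < tt (Suc i)"
begin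

abbreviation E where "E t X \<equiv> real_cond_exp M (F t) X"
abbreviation nt where "nt j \<equiv> next_time tt n T j"
abbreviation dlt where "dlt j X \<equiv> (\<lambda>y. E (nt j) X y - E (tt j) X y)"
abbreviation S where "S Dt i X \<equiv> (\<lambda>x. \<Sum>j\<in>{i..n}. Dt j (dlt j X) x)"
abbreviation LT where "LT \<equiv> L2 M (F T)"

lemma tt_mono: "i \<le> j \<Longrightarrow> j \<le> n \<Longrightarrow> tt i \<le> tt j"
proof (induction j)
  case 0
  then show ?case by simp
next
  case (Suc j)
  show ?case
  proof (cases "i = Suc j")
    case False
    then have "i \<le> j" using Suc.prems by simp
    then have "tt i \<le> tt j" using Suc.IH Suc.prems by simp
    also have "tt j < tt (Suc j)" using incr Suc.prems by simp
    finally show ?thesis by simp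
  qed simp
qed

lemma tt_rng: "i \<le> n \<Longrightarrow> 0 \<le> tt i \<and> tt i \<le> T"
  using tt_mono[of 0 i] tt_mono[of i n] t0 tn by simp

lemma nt_rng: "j \<le> n \<Longrightarrow> tt j \<le> nt j \<and> nt j \<le> T"
proof -
  assume j: "j \<le> n"
  show ?thesis
  proof (cases "j < n")
    case True
    then show ?thesis using incr[OF True] tt_rng[of "Suc j"] by (simp add: next_time_def)
  next
    case False
    then show ?thesis using tt_rng[OF j] by (simp add: next_time_def)
  qed
qed

lemma nt_le: "j < k \<Longrightarrow> k \<le> n \<Longrightarrow> nt j \<le> tt k"
  using tt_mono[of "Suc j" k] by (simp add: next_time_def)

lemma nt_Suc: "j < n \<Longrightarrow> nt j = tt (Suc j)"
  by (simp add: next_time_def)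

lemma nt_n: "nt n = T"
  by (simp add: next_time_def)

lemma sa: "0 \<le> t \<Longrightarrow> t \<le> T \<Longrightarrow> subalgebra M (F t)"
  using filt unfolding filtration_def by simp

lemma sp: "0 \<le> t \<Longrightarrow> t \<le> T \<Longrightarrow> space (F t) = space M"
  using sa unfolding subalgebra_def by simp

lemma sets_le: "0 \<le> s \<Longrightarrow> s \<le> t \<Longrightarrow> t \<le> T \<Longrightarrow> sets (F s) \<subseteq> sets (F t)"
  using filt unfolding filtration_def by simp

lemma ssub: "0 \<le> s \<Longrightarrow> s \<le> t \<Longrightarrow> t \<le> T \<Longrightarrow> subalgebra (F t) (F s)"
  unfolding subalgebra_def using sets_le[of s t] sp[of s] sp[of t] by simp

lemma sfs: "0 \<le> t \<Longrightarrow> t \<le> T \<Longrightarrow> sigma_finite_subalgebra M (F t)"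
proof -
  assume a: "0 \<le> t" "t \<le> T"
  have "finite_measure_subalgebra M (F t)"
    unfolding finite_measure_subalgebra_def finite_measure_subalgebra_axioms_def
    using sa[OF a] finite_measure_axioms by simp
  then show ?thesis by (rule finite_measure_subalgebra_is_sigma_finite)
qed

lemma sp2: "0 \<le> s \<Longrightarrow> s \<le> t \<Longrightarrow> t \<le> T \<Longrightarrow> space (F s) = space (F t)"
  using sp[of s] sp[of t] by simp

lemma meas_le: "0 \<le> s \<Longrightarrow> s \<le> t \<Longrightarrow> t \<le> T \<Longrightarrow> f \<in> borel_measurable (F s) \<Longrightarrow> f \<in> borel_measurable (F t)"
  by (rule meas_mono[OF sets_le sp2])

lemma L2_le: "0 \<le> s \<Longrightarrow> s \<le> t \<Longrightarrow> t \<le> T \<Longrightarrow> X \<in> L2 M (F s) \<Longrightarrow> X \<in> L2 M (F t)"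
  by (rule L2_mono[OF sets_le sp2])

lemma Linf_le: "0 \<le> s \<Longrightarrow> s \<le> t \<Longrightarrow> t \<le> T \<Longrightarrow> X \<in> Linf M (F s) \<Longrightarrow> X \<in> Linf M (F t)"
  by (rule Linf_mono[OF sets_le sp2])

lemma T0: "0 \<le> T" using t0 tn tt_mono[of 0 n] by simp

lemma saT: "subalgebra M (F T)" using sa[OF T0] by simp

lemma ce_id:
  assumes "0 \<le> s" "s \<le> t" "t \<le> T" "integrable M f" "f \<in> borel_measurable (F s)"
  shows "AE x in M. E t f x = f x"
proof -
  have m: "f \<in> borel_measurable (F t)" by (rule meas_le[OF assms(1,2,3,5)])
  have t: "0 \<le> t" using assms by simp
  show ?thesis by (rule sigma_finite_subalgebra.real_cond_exp_F_meas[OF sfs[OF t assms(3)] assms(4) m])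
qed

lemma ce_int: "0 \<le> t \<Longrightarrow> t \<le> T \<Longrightarrow> integrable M f \<Longrightarrow> integrable M (E t f)"
  by (rule sigma_finite_subalgebra.real_cond_exp_int(1)[OF sfs])

lemma ce_tower:
  assumes "0 \<le> s" "s \<le> t" "t \<le> T" "integrable M f"
  shows "AE x in M. E s (E t f) x = E s f x"
proof -
  have s: "s \<le> T" using assms by simp
  have t: "0 \<le> t" using assms by simp
  show ?thesis
    by (rule sigma_finite_subalgebra.real_cond_exp_nested_subalg[OF sfs[OF assms(1) s] sa[OF t assms(3)] ssub[OF assms(1,2,3)] assms(4)])
qed

lemma ce_tower2:
  assumes "0 \<le> s" "s \<le> t" "t \<le> T" "integrable M f"
  shows "AE x in M. E t (E s f) x = E s f x"
proof -
  have s: "s \<le> T" using assms by simp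
  have i: "integrable M (E s f)" by (rule ce_int[OF assms(1) s assms(4)])
  show ?thesis by (rule ce_id[OF assms(1,2,3) i borel_measurable_cond_exp])
qed

lemma ce_cong: "0 \<le> t \<Longrightarrow> t \<le> T \<Longrightarrow> AE x in M. f x = g x \<Longrightarrow> f \<in> borel_measurable M \<Longrightarrow> g \<in> borel_measurable M
   \<Longrightarrow> AE x in M. E t f x = E t g x"
  by (rule sigma_finite_subalgebra.real_cond_exp_cong[OF sfs])

lemma ce_add: "0 \<le> t \<Longrightarrow> t \<le> T \<Longrightarrow> integrable M f \<Longrightarrow> integrable M g
   \<Longrightarrow> AE x in M. E t (\<lambda>x. f x + g x) x = E t f x + E t g x"
  by (rule sigma_finite_subalgebra.real_cond_exp_add[OF sfs])

lemma ce_diff: "0 \<le> t \<Longrightarrow> t \<le> T \<Longrightarrow> integrable M f \<Longrightarrow> integrable M g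
   \<Longrightarrow> AE x in M. E t (\<lambda>x. f x - g x) x = E t f x - E t g x"
  by (rule sigma_finite_subalgebra.real_cond_exp_diff[OF sfs])

lemma ce_mono: "0 \<le> t \<Longrightarrow> t \<le> T \<Longrightarrow> AE x in M. f x \<le> g x \<Longrightarrow> integrable M f \<Longrightarrow> integrable M g
   \<Longrightarrow> AE x in M. E t f x \<le> E t g x"
  by (rule sigma_finite_subalgebra.real_cond_exp_mono[OF sfs])

lemma ce_mult: "0 \<le> t \<Longrightarrow> t \<le> T \<Longrightarrow> l \<in> borel_measurable (F t) \<Longrightarrow> g \<in> borel_measurable M
   \<Longrightarrow> integrable M (\<lambda>x. l x * g x) \<Longrightarrow> AE x in M. E t (\<lambda>x. l x * g x) x = l x * E t g x"
  by (rule sigma_finite_subalgebra.real_cond_exp_mult[OF sfs])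

lemma ce_L2: "0 \<le> t \<Longrightarrow> t \<le> T \<Longrightarrow> X \<in> LT \<Longrightarrow> E t X \<in> L2 M (F t)"
  by (rule L2_cexp[OF sfs _ saT])

lemma ce_LT: "0 \<le> t \<Longrightarrow> t \<le> T \<Longrightarrow> X \<in> LT \<Longrightarrow> E t X \<in> LT"
  by (rule L2_le[OF _ _ order_refl ce_L2])

lemma LT_int: "X \<in> LT \<Longrightarrow> integrable M X"
  by (rule L2_int[OF _ saT])

lemma LT_meas: "X \<in> LT \<Longrightarrow> X \<in> borel_measurable M"
  by (rule L2_meas[OF _ saT])

lemma dlt_LT:
  assumes "j \<le> n" "X \<in> LT" shows "dlt j X \<in> LT"
proof -
  have a: "0 \<le> nt j" "nt j \<le> T" "0 \<le> tt j" "tt j \<le> T" using nt_rng[OF assms(1)] tt_rng[OF assms(1)] by simp_all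
  show ?thesis by (rule L2_diff[OF ce_LT[OF a(1,2) assms(2)] ce_LT[OF a(3,4) assms(2)] saT])
qed

end

context prob_space begin

lemma Lcong: "L2_map M FT G D \<Longrightarrow> X \<in> L2 M FT \<Longrightarrow> Y \<in> L2 M FT \<Longrightarrow> AE x in M. X x = Y x
  \<Longrightarrow> AE x in M. D X x = D Y x"
  unfolding L2_map_def by simp

lemma Lplus: "L2_map M FT G D \<Longrightarrow> X \<in> L2 M FT \<Longrightarrow> D X \<in> L2_plus M G"
  unfolding L2_map_def by simp

lemma shift_le:
  fixes D :: "('a \<Rightarrow> real) \<Rightarrow> 'a \<Rightarrow> real" and X m :: "'a \<Rightarrow> real"
  assumes G: "subalgebra M G" and FT: "subalgebra M FT" and GF: "sets G \<subseteq> sets FT" "space G = space FT"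
    and d1: "D1 M FT G D" and d3: "D3 M FT G D"
    and X: "X \<in> L2 M FT" and m: "m \<in> L2 M G"
  shows "AE x in M. D (\<lambda>x. X x + m x) x \<le> D X x"
proof -
  have mg: "m \<in> borel_measurable G" using m unfolding L2_def by simp
  have mT: "m \<in> L2 M FT" by (rule L2_mono[OF GF m])
  have Y: "(\<lambda>x. X x + m x) \<in> L2 M FT" by (rule L2_add[OF X mT FT])
  have key: "AE x in M. \<bar>m x\<bar> \<le> real k \<longrightarrow> D (\<lambda>x. X x + m x) x \<le> D X x" for k :: nat
  proof -
    define l where "l = (\<lambda>x. if \<bar>m x\<bar> \<le> real k then 1 else (0::real))"
    define mk where "mk = (\<lambda>x. l x * m x)"
    have lg: "l \<in> borel_measurable G" unfolding l_def using mg by measurable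
    have mkg: "mk \<in> borel_measurable G" unfolding mk_def using lg mg by (rule borel_measurable_times)
    have lb: "\<bar>l x\<bar> \<le> 1" for x by (simp add: l_def)
    have lL: "l \<in> Linf M G" unfolding Linf_def using lg lb by auto
    have mkb: "\<bar>mk x\<bar> \<le> real k" for x by (simp add: mk_def l_def)
    have mkL: "mk \<in> Linf M G" unfolding Linf_def using mkg mkb by auto
    have mkT: "mk \<in> L2 M FT" by (rule L2_mono[OF GF L2_Linf[OF mkL G]])
    have Xk: "(\<lambda>x. X x + mk x) \<in> L2 M FT" by (rule L2_add[OF X mkT FT])
    have l01: "AE x in M. 0 \<le> l x \<and> l x \<le> 1" by (simp add: l_def)
    have d3': "\<forall>X\<in>L2 M FT. \<forall>Y\<in>L2 M FT. \<forall>l\<in>Linf M G.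
        (AE \<omega> in M. 0 \<le> l \<omega> \<and> l \<omega> \<le> 1) \<longrightarrow>
        (AE \<omega> in M. D (\<lambda>x. l x * X x + (1 - l x) * Y x) \<omega> \<le> l \<omega> * D X \<omega> + (1 - l \<omega>) * D Y \<omega>)"
      using d3 unfolding D3_def by simp
    have c: "AE x in M. D (\<lambda>x. l x * (X x + mk x) + (1 - l x) * (X x + m x)) x
                \<le> l x * D (\<lambda>x. X x + mk x) x + (1 - l x) * D (\<lambda>x. X x + m x) x"
      using d3'[rule_format, OF Xk Y lL l01] .
    have eq: "(\<lambda>x. l x * (X x + mk x) + (1 - l x) * (X x + m x)) = (\<lambda>x. X x + m x)"
      by (rule ext) (simp add: l_def mk_def)
    have d1': "\<forall>X \<in> L2 M FT. \<forall>m \<in> Linf M G. AE \<omega> in M. D (\<lambda>x. X x + m x) \<omega> = D X \<omega>"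
      using d1 unfolding D1_def by simp
    have e1: "AE x in M. D (\<lambda>x. X x + mk x) x = D X x"
      using d1'[rule_format, OF X mkL] .
    from c e1 show ?thesis unfolding eq
    proof eventually_elim
      case (elim x)
      show ?case
      proof
        assume "\<bar>m x\<bar> \<le> real k"
        then have "l x = 1" by (simp add: l_def)
        then show "D (\<lambda>x. X x + m x) x \<le> D X x" using elim by simp
      qed
    qed
  qed
  have "AE x in M. \<forall>k::nat. \<bar>m x\<bar> \<le> real k \<longrightarrow> D (\<lambda>x. X x + m x) x \<le> D X x"
    unfolding AE_all_countable by (intro allI key)
  then show ?thesis
  proof eventually_elim
    case (elim x)
    have "\<bar>m x\<bar> \<le> real (nat \<lceil>\<bar>m x\<bar>\<rceil>)" by (rule real_nat_ceiling_ge)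
    then show ?case using elim by blast
  qed
qed

lemma shift:
  fixes D :: "('a \<Rightarrow> real) \<Rightarrow> 'a \<Rightarrow> real" and X m :: "'a \<Rightarrow> real"
  assumes G: "subalgebra M G" and FT: "subalgebra M FT" and GF: "sets G \<subseteq> sets FT" "space G = space FT"
    and d1: "D1 M FT G D" and d3: "D3 M FT G D"
    and X: "X \<in> L2 M FT" and m: "m \<in> L2 M G"
  shows "AE x in M. D (\<lambda>x. X x + m x) x = D X x"
proof -
  have mT: "m \<in> L2 M FT" by (rule L2_mono[OF GF m])
  have Y: "(\<lambda>x. X x + m x) \<in> L2 M FT" by (rule L2_add[OF X mT FT])
  have m': "(\<lambda>x. - m x) \<in> L2 M G" by (rule L2_uminus[OF m G])
  have 1: "AE x in M. D (\<lambda>x. X x + m x) x \<le> D X x" by (rule shift_le[OF G FT GF d1 d3 X m])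
  have 2: "AE x in M. D (\<lambda>x. (X x + m x) + - m x) x \<le> D (\<lambda>x. X x + m x) x"
    by (rule shift_le[OF G FT GF d1 d3 Y m'])
  have e: "(\<lambda>x. (X x + m x) + - m x) = X" by (rule ext) simp
  from 1 2 show ?thesis unfolding e by eventually_elim simp
qed

lemma shift_minus:
  fixes D :: "('a \<Rightarrow> real) \<Rightarrow> 'a \<Rightarrow> real" and X m :: "'a \<Rightarrow> real"
  assumes G: "subalgebra M G" and FT: "subalgebra M FT" and GF: "sets G \<subseteq> sets FT" "space G = space FT"
    and d1: "D1 M FT G D" and d3: "D3 M FT G D"
    and X: "X \<in> L2 M FT" and m: "m \<in> L2 M G"
  shows "AE x in M. D (\<lambda>x. X x - m x) x = D X x"
proof -
  have m': "(\<lambda>x. - m x) \<in> L2 M G" by (rule L2_uminus[OF m G])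
  have "AE x in M. D (\<lambda>x. X x + - m x) x = D X x" by (rule shift[OF G FT GF d1 d3 X m'])
  then show ?thesis by simp
qed

end

context grid begin

lemma Dmeas:
  assumes i: "i \<le> n" and lm: "L2_map M (F T) (F (tt i)) Dj" and Z: "Z \<in> LT"
  shows "Dj Z \<in> L2 M (F (tt i))" "Dj Z \<in> LT" "integrable M (Dj Z)" "Dj Z \<in> borel_measurable M"
    "AE x in M. E (tt i) (Dj Z) x = Dj Z x" "AE x in M. 0 \<le> Dj Z x"
proof -
  have r: "0 \<le> tt i" "tt i \<le> T" using tt_rng[OF i] by simp_all
  have p: "Dj Z \<in> L2_plus M (F (tt i))" by (rule Lplus[OF lm Z])
  show 1: "Dj Z \<in> L2 M (F (tt i))" by (rule L2_plus_L2[OF p])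
  show 2: "Dj Z \<in> LT" by (rule L2_le[OF r order_refl 1])
  show 3: "integrable M (Dj Z)" by (rule LT_int[OF 2])
  show "Dj Z \<in> borel_measurable M" by (rule LT_meas[OF 2])
  have g: "Dj Z \<in> borel_measurable (F (tt i))" using 1 unfolding L2_def by simp
  show "AE x in M. E (tt i) (Dj Z) x = Dj Z x" by (rule ce_id[OF r(1) order_refl r(2) 3 g])
  show "AE x in M. 0 \<le> Dj Z x" using p unfolding L2_plus_def by simp
qed

lemma S_LT:
  assumes lm: "\<And>j. j \<le> n \<Longrightarrow> L2_map M (F T) (F (tt j)) (Dt j)" and X: "X \<in> LT"
  shows "S Dt i X \<in> LT" "integrable M (S Dt i X)" "S Dt i X \<in> borel_measurable M"
proof -
  have "Dt j (dlt j X) \<in> LT" if "j \<in> {i..n}" for j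
  proof -
    have j: "j \<le> n" using that by simp
    show ?thesis by (rule Dmeas(2)[OF j lm[OF j] dlt_LT[OF j X]])
  qed
  then show 1: "S Dt i X \<in> LT" by (intro L2_sum[OF finite_atLeastAtMost _ saT])
  show "integrable M (S Dt i X)" by (rule LT_int[OF 1])
  show "S Dt i X \<in> borel_measurable M" by (rule LT_meas[OF 1])
qed

lemma shiftD:
  assumes i: "i \<le> n" and d1: "D1 M (F T) (F (tt i)) Dj" and d3: "D3 M (F T) (F (tt i)) Dj"
    and X: "X \<in> LT" and m: "m \<in> L2 M (F (tt i))"
  shows "AE x in M. Dj (\<lambda>x. X x - m x) x = Dj X x"
proof -
  have r: "0 \<le> tt i" "tt i \<le> T" using tt_rng[OF i] by simp_all
  show ?thesis
    by (rule shift_minus[OF sa[OF r] saT sets_le[OF r(1,2) order_refl] sp2[OF r(1,2) order_refl] d1 d3 X m])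
qed

lemma fwd:
  assumes lm: "\<And>i. i \<le> n \<Longrightarrow> L2_map M (F T) (F (tt i)) (D i)"
    and d1: "\<And>i. i \<le> n \<Longrightarrow> D1 M (F T) (F (tt i)) (D i)"
    and d3: "\<And>i. i \<le> n \<Longrightarrow> D3 M (F T) (F (tt i)) (D i)"
    and d5: "D5 M F T tt n D"
  shows "i \<le> n \<Longrightarrow> X \<in> LT \<Longrightarrow> AE x in M. D i X x = E (tt i) (S D i X) x"
proof (induction "n - i" arbitrary: i X)
  case 0
  then have i: "i = n" by simp
  have X0: "X \<in> LT" using 0 by simp
  have r: "0 \<le> tt n" "tt n \<le> T" using tt_rng[of n] by simp_all
  define m where "m = E (tt n) X"
  have mL: "m \<in> L2 M (F (tt n))" unfolding m_def by (rule ce_L2[OF r X0])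
  have mT: "m \<in> LT" unfolding m_def by (rule ce_LT[OF r X0])
  have XT: "X \<in> borel_measurable (F T)" using X0 unfolding L2_def by simp
  have a1: "AE x in M. E T X x = X x" by (rule ce_id[OF T0 order_refl order_refl LT_int[OF X0] XT])
  have a2: "AE x in M. dlt n X x = X x - m x" using a1 unfolding nt_n m_def by eventually_elim simp
  have Xm: "(\<lambda>x. X x - m x) \<in> LT" by (rule L2_diff[OF X0 mT saT])
  have a3: "AE x in M. D n (dlt n X) x = D n (\<lambda>x. X x - m x) x"
    by (rule Lcong[OF lm[OF order_refl] dlt_LT[OF order_refl X0] Xm a2])
  have a4: "AE x in M. D n (\<lambda>x. X x - m x) x = D n X x"
    by (rule shiftD[OF order_refl d1[OF order_refl] d3[OF order_refl] X0 mL])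
  have a5: "AE x in M. E (tt n) (D n (dlt n X)) x = D n (dlt n X) x"
    by (rule Dmeas(5)[OF order_refl lm[OF order_refl] dlt_LT[OF order_refl X0]])
  have eS: "S D n X = D n (dlt n X)" by (rule ext) simp
  show ?case unfolding i eS using a3 a4 a5 by eventually_elim simp
next
  case (Suc k)
  then have i: "i < n" by simp
  have k: "k = n - Suc i" using Suc.hyps(2) by simp
  have IH: "AE x in M. D (Suc i) X x = E (tt (Suc i)) (S D (Suc i) X) x"
    by (rule Suc.hyps(1)[OF k]) (use i Suc.prems in simp_all)
  have r: "0 \<le> tt i" "tt i \<le> T" using tt_rng[of i] i by simp_all
  have r1: "0 \<le> tt (Suc i)" "tt (Suc i) \<le> T" using tt_rng[of "Suc i"] i by simp_all
  have le: "tt i \<le> tt (Suc i)" using incr[OF i] by simp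
  have il: "i \<le> n" "Suc i \<le> n" using i by simp_all
  have X: "X \<in> LT" by (rule Suc.prems(2))
  have d5': "\<forall>i j X. i \<le> j \<and> j \<le> n \<and> X \<in> L2 M (F T) \<longrightarrow>
        (AE \<omega> in M. D i X \<omega> = D i (real_cond_exp M (F (tt j)) X) \<omega> + real_cond_exp M (F (tt i)) (D j X) \<omega>)"
    using d5 unfolding D5_def by simp
  have a0: "AE x in M. D i X x = D i (E (tt (Suc i)) X) x + E (tt i) (D (Suc i) X) x"
    using d5'[rule_format, of i "Suc i" X] il X by simp
  have SL: "S D (Suc i) X \<in> LT" "integrable M (S D (Suc i) X)" "S D (Suc i) X \<in> borel_measurable M"
    using S_LT[OF lm X] by simp_all
  have a1: "AE x in M. E (tt i) (D (Suc i) X) x = E (tt i) (E (tt (Suc i)) (S D (Suc i) X)) x"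
    by (rule ce_cong[OF r IH Dmeas(4)[OF il(2) lm[OF il(2)] X] borel_measurable_cond_exp2])
  have a2: "AE x in M. E (tt i) (E (tt (Suc i)) (S D (Suc i) X)) x = E (tt i) (S D (Suc i) X) x"
    by (rule ce_tower[OF r(1) le r1(2) SL(2)])
  have eD: "dlt i X = (\<lambda>y. E (tt (Suc i)) X y - E (tt i) X y)" unfolding nt_Suc[OF i] ..
  have a3: "AE x in M. D i (dlt i X) x = D i (E (tt (Suc i)) X) x"
    unfolding eD by (rule shiftD[OF il(1) d1[OF il(1)] d3[OF il(1)] ce_LT[OF r1 X] ce_L2[OF r X]])
  have a4: "AE x in M. E (tt i) (D i (dlt i X)) x = D i (dlt i X) x"
    by (rule Dmeas(5)[OF il(1) lm[OF il(1)] dlt_LT[OF il(1) X]])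
  have a5: "AE x in M. E (tt i) (\<lambda>x. D i (dlt i X) x + S D (Suc i) X x) x
      = E (tt i) (D i (dlt i X)) x + E (tt i) (S D (Suc i) X) x"
    by (rule ce_add[OF r Dmeas(3)[OF il(1) lm[OF il(1)] dlt_LT[OF il(1) X]] SL(2)])
  have eS: "(\<lambda>x. D i (dlt i X) x + S D (Suc i) X x) = S D i X"
    by (rule ext) (simp add: sum.atLeast_Suc_atMost[OF il(1)])
  from a0 a1 a2 a3 a4 a5 show ?case unfolding eS by eventually_elim simp
qed

end

lemma sum_split: "(i::nat) \<le> j \<Longrightarrow> j \<le> n \<Longrightarrow> sum f {i..n} = sum f {i..<j} + sum f {j..n}"
proof -
  assume a: "i \<le> j" "j \<le> n"
  have e: "{i..n} = {i..<j} \<union> {j..n}" using a by auto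
  have "sum f ({i..<j} \<union> {j..n}) = sum f {i..<j} + sum f {j..n}"
    by (rule sum.union_disjoint) auto
  then show ?thesis unfolding e .
qed

locale bwd = grid +
  fixes D Dt :: "nat \<Rightarrow> ('a \<Rightarrow> real) \<Rightarrow> 'a \<Rightarrow> real"
  assumes cd: "\<And>j. j \<le> n \<Longrightarrow> cond_conv_dev M (F T) (F (tt j)) (Dt j)"
    and lm: "\<And>i. i \<le> n \<Longrightarrow> L2_map M (F T) (F (tt i)) (D i)"
    and z: "\<And>i. i \<le> n \<Longrightarrow> AE x in M. D i (\<lambda>_. 0) x = 0"
    and rep: "\<And>i X. i \<le> n \<Longrightarrow> X \<in> LT \<Longrightarrow> AE x in M. D i X x = E (tt i) (S Dt i X) x"
begin

lemma lmt: "j \<le> n \<Longrightarrow> L2_map M (F T) (F (tt j)) (Dt j)"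
  using cd unfolding cond_conv_dev_def by simp

lemma dt0: "j \<le> n \<Longrightarrow> AE x in M. Dt j (\<lambda>_. 0) x = 0"
  using cd unfolding cond_conv_dev_def by simp

lemma dt2: "j \<le> n \<Longrightarrow> D2 M (F T) (F (tt j)) (Dt j)"
  using cd unfolding cond_conv_dev_def by simp

lemma dt3: "j \<le> n \<Longrightarrow> D3 M (F T) (F (tt j)) (Dt j)"
  using cd unfolding cond_conv_dev_def by simp

lemma zero_LT: "(\<lambda>_. 0::real) \<in> LT"
  unfolding L2_def by simp

lemma dlt_cong:
  assumes j: "j \<le> n" and m: "X \<in> borel_measurable M" "Y \<in> borel_measurable M" and e: "AE x in M. X x = Y x"
  shows "AE x in M. dlt j X x = dlt j Y x"
proof -
  have a: "0 \<le> nt j" "nt j \<le> T" "0 \<le> tt j" "tt j \<le> T" using nt_rng[OF j] tt_rng[OF j] by simp_all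
  have 1: "AE x in M. E (nt j) X x = E (nt j) Y x" by (rule ce_cong[OF a(1,2) e m])
  have 2: "AE x in M. E (tt j) X x = E (tt j) Y x" by (rule ce_cong[OF a(3,4) e m])
  from 1 2 show ?thesis by eventually_elim simp
qed

lemma dlt_meas:
  assumes j: "j \<le> n" and i: "integrable M Y" and m: "Y \<in> borel_measurable (F (tt j))"
  shows "AE x in M. dlt j Y x = 0"
proof -
  have a: "tt j \<le> nt j" "nt j \<le> T" "0 \<le> tt j" "tt j \<le> T" using nt_rng[OF j] tt_rng[OF j] by simp_all
  have 1: "AE x in M. E (nt j) Y x = Y x" by (rule ce_id[OF a(3,1,2) i m])
  have 2: "AE x in M. E (tt j) Y x = Y x" by (rule ce_id[OF a(3) order_refl a(4) i m])
  from 1 2 show ?thesis by eventually_elim simp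
qed

lemma S_cong:
  assumes X: "X \<in> LT" and Y: "Y \<in> LT"
    and h: "\<And>j. i \<le> j \<Longrightarrow> j \<le> n \<Longrightarrow> AE x in M. dlt j X x = dlt j Y x"
  shows "AE x in M. S Dt i X x = S Dt i Y x"
proof -
  have "AE x in M. \<forall>j\<in>{i..n}. Dt j (dlt j X) x = Dt j (dlt j Y) x"
  proof (rule AE_finite_allI[OF finite_atLeastAtMost])
    fix j assume "j \<in> {i..n}"
    then have j: "i \<le> j" "j \<le> n" by simp_all
    show "AE x in M. Dt j (dlt j X) x = Dt j (dlt j Y) x"
      by (rule Lcong[OF lmt[OF j(2)] dlt_LT[OF j(2) X] dlt_LT[OF j(2) Y] h[OF j]])
  qed
  then show ?thesis by eventually_elim (rule sum.cong, simp_all)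
qed

lemma D_cong_S:
  assumes i: "i \<le> n" and X: "X \<in> LT" and Y: "Y \<in> LT" and e: "AE x in M. S Dt i X x = S Dt i Y x"
  shows "AE x in M. D i X x = D i Y x"
proof -
  have a: "0 \<le> tt i" "tt i \<le> T" using tt_rng[OF i] by simp_all
  have 1: "AE x in M. E (tt i) (S Dt i X) x = E (tt i) (S Dt i Y) x"
    by (rule ce_cong[OF a e S_LT(3)[OF lmt X] S_LT(3)[OF lmt Y]])
  from rep[OF i X] rep[OF i Y] 1 show ?thesis by eventually_elim simp
qed

lemma bw_D1: "i \<le> n \<Longrightarrow> D1 M (F T) (F (tt i)) (D i)"
  unfolding D1_def
proof (intro ballI)
  fix X m assume i: "i \<le> n" and X: "X \<in> LT" and m: "m \<in> Linf M (F (tt i))"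
  have a: "0 \<le> tt i" "tt i \<le> T" using tt_rng[OF i] by simp_all
  have mL: "m \<in> L2 M (F (tt i))" by (rule L2_Linf[OF m sa[OF a]])
  have mT: "m \<in> LT" by (rule L2_le[OF a order_refl mL])
  have mg: "m \<in> borel_measurable (F (tt i))" using m unfolding Linf_def by simp
  have XmT: "(\<lambda>x. X x + m x) \<in> LT" by (rule L2_add[OF X mT saT])
  have ce: "AE x in M. E t (\<lambda>x. X x + m x) x = E t X x + m x" if t: "tt i \<le> t" "t \<le> T" for t
  proof -
    have t0: "0 \<le> t" using a t by simp
    have 1: "AE x in M. E t (\<lambda>x. X x + m x) x = E t X x + E t m x"
      by (rule ce_add[OF t0 t(2) LT_int[OF X] LT_int[OF mT]])
    have 2: "AE x in M. E t m x = m x" by (rule ce_id[OF a(1) t LT_int[OF mT] mg])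
    from 1 2 show ?thesis by eventually_elim simp
  qed
  have "AE x in M. S Dt i (\<lambda>x. X x + m x) x = S Dt i X x"
  proof (rule S_cong[OF XmT X])
    fix j assume j: "i \<le> j" "j \<le> n"
    have r: "tt i \<le> tt j" "tt j \<le> nt j" "nt j \<le> T" "tt j \<le> T"
      using tt_mono[OF j] nt_rng[OF j(2)] tt_rng[OF j(2)] by simp_all
    have 1: "AE x in M. E (nt j) (\<lambda>x. X x + m x) x = E (nt j) X x + m x"
      by (rule ce[OF order_trans[OF r(1,2)] r(3)])
    have 2: "AE x in M. E (tt j) (\<lambda>x. X x + m x) x = E (tt j) X x + m x"
      by (rule ce[OF r(1) r(4)])
    from 1 2 show "AE x in M. dlt j (\<lambda>x. X x + m x) x = dlt j X x" by eventually_elim simp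
  qed
  then show "AE x in M. D i (\<lambda>x. X x + m x) x = D i X x"
    by (rule D_cong_S[OF i XmT X])
qed

lemma bw_D5: "D5 M F T tt n D"
  unfolding D5_def
proof (intro allI impI)
  fix i j X assume h: "i \<le> j \<and> j \<le> n \<and> X \<in> LT"
  then have ij: "i \<le> j" and jn: "j \<le> n" and X: "X \<in> LT" by simp_all
  have i: "i \<le> n" using ij jn by simp
  have a: "0 \<le> tt i" "tt i \<le> T" using tt_rng[OF i] by simp_all
  have b: "0 \<le> tt j" "tt j \<le> T" using tt_rng[OF jn] by simp_all
  have ab: "tt i \<le> tt j" by (rule tt_mono[OF ij jn])
  define W where "W = E (tt j) X"
  have WT: "W \<in> LT" unfolding W_def by (rule ce_LT[OF b X])
  have Wg: "W \<in> borel_measurable (F (tt j))" unfolding W_def by (rule borel_measurable_cond_exp)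
  define P where "P = (\<lambda>x. \<Sum>k\<in>{i..<j}. Dt k (dlt k X) x)"
  have PT: "P \<in> LT" unfolding P_def
    by (rule L2_sum[OF finite_atLeastLessThan _ saT])
       (rule Dmeas(2)[OF _ lmt dlt_LT[OF _ X]], use jn in auto)
  have t1: "AE x in M. \<forall>k\<in>{i..<j}. Dt k (dlt k W) x = Dt k (dlt k X) x"
  proof (rule AE_finite_allI[OF finite_atLeastLessThan])
    fix k assume "k \<in> {i..<j}"
    then have k: "k < j" "k \<le> n" "i \<le> k" using jn by simp_all
    have r: "0 \<le> tt k" "tt k \<le> nt k" "nt k \<le> tt j" "tt k \<le> tt j"
      using tt_rng[OF k(2)] nt_rng[OF k(2)] nt_le[OF k(1) jn] by simp_all
    have 1: "AE x in M. E (nt k) W x = E (nt k) X x" unfolding W_def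
      by (rule ce_tower[OF order_trans[OF r(1,2)] r(3) b(2) LT_int[OF X]])
    have 2: "AE x in M. E (tt k) W x = E (tt k) X x" unfolding W_def
      by (rule ce_tower[OF r(1) r(4) b(2) LT_int[OF X]])
    have 3: "AE x in M. dlt k W x = dlt k X x" using 1 2 by eventually_elim simp
    show "AE x in M. Dt k (dlt k W) x = Dt k (dlt k X) x"
      by (rule Lcong[OF lmt[OF k(2)] dlt_LT[OF k(2) WT] dlt_LT[OF k(2) X] 3])
  qed
  have t2: "AE x in M. \<forall>k\<in>{j..n}. Dt k (dlt k W) x = 0"
  proof (rule AE_finite_allI[OF finite_atLeastAtMost])
    fix k assume "k \<in> {j..n}"
    then have k: "j \<le> k" "k \<le> n" by simp_all
    have r: "tt j \<le> tt k" "tt k \<le> T" using tt_mono[OF k] tt_rng[OF k(2)] by simp_all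
    have Wk: "W \<in> borel_measurable (F (tt k))" by (rule meas_le[OF b(1) r Wg])
    have 3: "AE x in M. dlt k W x = 0" by (rule dlt_meas[OF k(2) LT_int[OF WT] Wk])
    have 4: "AE x in M. Dt k (dlt k W) x = Dt k (\<lambda>_. 0) x"
      by (rule Lcong[OF lmt[OF k(2)] dlt_LT[OF k(2) WT] zero_LT 3])
    from 4 dt0[OF k(2)] show "AE x in M. Dt k (dlt k W) x = 0" by eventually_elim simp
  qed
  have SW: "AE x in M. S Dt i W x = P x"
    using t1 t2
  proof eventually_elim
    case (elim x)
    have "S Dt i W x = (\<Sum>k\<in>{i..<j}. Dt k (dlt k W) x) + (\<Sum>k\<in>{j..n}. Dt k (dlt k W) x)"
      by (rule sum_split[OF ij jn])
    also have "\<dots> = P x + 0" unfolding P_def using elim by (intro arg_cong2[where f="(+)"] sum.cong) simp_all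
    finally show ?case by simp
  qed
  have e1: "AE x in M. D i W x = E (tt i) P x"
  proof -
    have "AE x in M. E (tt i) (S Dt i W) x = E (tt i) P x"
      by (rule ce_cong[OF a SW S_LT(3)[OF lmt WT] LT_meas[OF PT]])
    with rep[OF i WT] show ?thesis by eventually_elim simp
  qed
  have SjL: "integrable M (S Dt j X)" by (rule S_LT(2)[OF lmt X])
  have e2: "AE x in M. E (tt i) (D j X) x = E (tt i) (S Dt j X) x"
  proof -
    have "AE x in M. E (tt i) (D j X) x = E (tt i) (E (tt j) (S Dt j X)) x"
      by (rule ce_cong[OF a rep[OF jn X] Dmeas(4)[OF jn lm[OF jn] X] borel_measurable_cond_exp2])
    with ce_tower[OF a(1) ab b(2) SjL] show ?thesis by eventually_elim simp
  qed
  have e3: "AE x in M. E (tt i) (\<lambda>x. P x + S Dt j X x) x = E (tt i) P x + E (tt i) (S Dt j X) x"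
    by (rule ce_add[OF a LT_int[OF PT] SjL])
  have eS: "(\<lambda>x. P x + S Dt j X x) = S Dt i X"
    by (rule ext) (simp add: P_def sum_split[OF ij jn])
  from rep[OF i X] e1 e2 e3 show "AE x in M. D i X x = D i (E (tt j) X) x + E (tt i) (D j X) x"
    unfolding eS W_def[symmetric] by eventually_elim simp
qed

lemma bw_D2:
  assumes i: "i \<le> n"
  shows "D2 M (F T) (F (tt i)) (D i)"
  unfolding D2_def
proof (intro ballI conjI iffI)
  have a: "0 \<le> tt i" "tt i \<le> T" using tt_rng[OF i] by simp_all
  {
    fix X assume X: "X \<in> LT"
    show "AE x in M. 0 \<le> D i X x" by (rule Dmeas(6)[OF i lm[OF i] X])
  }
  {
    fix X assume X: "X \<in> LT" and h: "AE x in M. D i X x = 0"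
    have SL: "integrable M (S Dt i X)" by (rule S_LT(2)[OF lmt X])
    have h1: "AE x in M. E (tt i) (S Dt i X) x = 0" using rep[OF i X] h by eventually_elim simp
    have int1: "integral\<^sup>L M (E (tt i) (S Dt i X)) = integral\<^sup>L M (S Dt i X)"
      by (rule sigma_finite_subalgebra.real_cond_exp_int(2)[OF sfs[OF a] SL])
    have int2: "integral\<^sup>L M (E (tt i) (S Dt i X)) = integral\<^sup>L M (\<lambda>_. 0::real)"
      by (rule integral_cong_AE[OF borel_measurable_cond_exp2 borel_measurable_const h1])
    have nonneg: "AE x in M. \<forall>j\<in>{i..n}. 0 \<le> Dt j (dlt j X) x"
    proof (rule AE_finite_allI[OF finite_atLeastAtMost])
      fix j assume "j \<in> {i..n}"
      then have jn: "j \<le> n" by simp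
      show "AE x in M. 0 \<le> Dt j (dlt j X) x" by (rule Dmeas(6)[OF jn lmt[OF jn] dlt_LT[OF jn X]])
    qed
    have Snn: "AE x in M. 0 \<le> S Dt i X x" using nonneg by eventually_elim (rule sum_nonneg, simp)
    have "integral\<^sup>L M (S Dt i X) = 0" using int1 int2 by simp
    then have S0: "AE x in M. S Dt i X x = 0" using integral_nonneg_eq_0_iff_AE[OF SL Snn] by simp
    have each: "AE x in M. \<forall>j\<in>{i..n}. Dt j (dlt j X) x = 0"
      using S0 nonneg
    proof eventually_elim
      case (elim x)
      have "S Dt i X x = 0 \<longleftrightarrow> (\<forall>j\<in>{i..n}. Dt j (dlt j X) x = 0)"
        by (rule sum_nonneg_eq_0_iff[OF finite_atLeastAtMost]) (use elim in simp)
      then show ?case using elim by simp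
    qed
    have dz: "AE x in M. E (nt j) X x = E (tt j) X x" if j: "i \<le> j" "j \<le> n" for j
    proof -
      have r: "0 \<le> tt j" "tt j \<le> nt j" "nt j \<le> T" "tt j \<le> T"
        using tt_rng[OF j(2)] nt_rng[OF j(2)] by simp_all
      have e0: "AE x in M. Dt j (dlt j X) x = 0" using each by eventually_elim (use j in simp)
      have d2': "\<forall>X\<in>LT. (AE \<omega> in M. 0 \<le> Dt j X \<omega>) \<and>
        ((AE \<omega> in M. Dt j X \<omega> = 0) \<longleftrightarrow> (\<exists>Y \<in> borel_measurable (F (tt j)). AE \<omega> in M. X \<omega> = Y \<omega>))"
        using dt2[OF j(2)] unfolding D2_def by simp
      obtain Y where Yg: "Y \<in> borel_measurable (F (tt j))" and eY: "AE x in M. dlt j X x = Y x"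
        using d2'[rule_format, OF dlt_LT[OF j(2) X]] e0 by blast
      have Ym: "Y \<in> borel_measurable M" by (rule measurable_from_subalg[OF sa[OF r(1,4)] Yg])
      have Yi: "integrable M Y" by (rule integrable_cong_AE_imp[OF LT_int[OF dlt_LT[OF j(2) X]] Ym eY])
      have q1: "AE x in M. E (tt j) (dlt j X) x = E (tt j) Y x"
        by (rule ce_cong[OF r(1,4) eY LT_meas[OF dlt_LT[OF j(2) X]] Ym])
      have q2: "AE x in M. E (tt j) Y x = Y x" by (rule ce_id[OF r(1) order_refl r(4) Yi Yg])
      have q3: "AE x in M. E (tt j) (dlt j X) x = E (tt j) (E (nt j) X) x - E (tt j) (E (tt j) X) x"
        by (rule ce_diff[OF r(1,4) ce_int[OF order_trans[OF r(1,2)] r(3) LT_int[OF X]] ce_int[OF r(1,4) LT_int[OF X]]])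
      have q4: "AE x in M. E (tt j) (E (nt j) X) x = E (tt j) X x"
        by (rule ce_tower[OF r(1,2,3) LT_int[OF X]])
      have q5: "AE x in M. E (tt j) (E (tt j) X) x = E (tt j) X x"
        by (rule ce_tower[OF r(1) order_refl r(4) LT_int[OF X]])
      from eY q1 q2 q3 q4 q5 show ?thesis by eventually_elim simp
    qed
    have tele: "j \<le> n \<longrightarrow> i \<le> j \<longrightarrow> (AE x in M. E (nt j) X x = E (tt i) X x)" for j
    proof (induction j)
      case 0
      then show ?case using dz[of 0] by simp
    next
      case (Suc j)
      show ?case
      proof (intro impI)
        assume h1: "Suc j \<le> n" and h2: "i \<le> Suc j"
        show "AE x in M. E (nt (Suc j)) X x = E (tt i) X x"
        proof (cases "i = Suc j")
          case True
          then show ?thesis using dz[of "Suc j"] h1 by simp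
        next
          case False
          then have ij: "i \<le> j" "j < n" using h1 h2 by simp_all
          have 1: "AE x in M. E (nt j) X x = E (tt i) X x" using Suc.IH ij by simp
          have 2: "AE x in M. E (nt (Suc j)) X x = E (tt (Suc j)) X x" by (rule dz) (use ij in simp_all)
          have 3: "nt j = tt (Suc j)" by (rule nt_Suc[OF ij(2)])
          from 1 2 show ?thesis unfolding 3 by eventually_elim simp
        qed
      qed
    qed
    have fin: "AE x in M. E T X x = E (tt i) X x" using tele[of n] i unfolding nt_n by simp
    have XT: "X \<in> borel_measurable (F T)" using X unfolding L2_def by simp
    have idT: "AE x in M. E T X x = X x" by (rule ce_id[OF T0 order_refl order_refl LT_int[OF X] XT])
    have "AE x in M. X x = E (tt i) X x" using fin idT by eventually_elim simp
    then show "\<exists>Y \<in> borel_measurable (F (tt i)). AE x in M. X x = Y x"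
      using borel_measurable_cond_exp by blast
  }
  {
    fix X assume X: "X \<in> LT" and ex: "\<exists>Y \<in> borel_measurable (F (tt i)). AE x in M. X x = Y x"
    then obtain Y where Yg: "Y \<in> borel_measurable (F (tt i))" and eY: "AE x in M. X x = Y x" by blast
    have Ym: "Y \<in> borel_measurable M" by (rule measurable_from_subalg[OF sa[OF a] Yg])
    have Yi: "integrable M Y" by (rule integrable_cong_AE_imp[OF LT_int[OF X] Ym eY])
    have "AE x in M. S Dt i X x = S Dt i (\<lambda>_. 0) x"
    proof (rule S_cong[OF X zero_LT])
      fix j assume j: "i \<le> j" "j \<le> n"
      have r: "tt i \<le> tt j" "tt j \<le> T" using tt_mono[OF j] tt_rng[OF j(2)] by simp_all
      have 1: "AE x in M. dlt j X x = dlt j Y x" by (rule dlt_cong[OF j(2) LT_meas[OF X] Ym eY])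
      have 2: "AE x in M. dlt j Y x = 0" by (rule dlt_meas[OF j(2) Yi meas_le[OF a(1) r Yg]])
      have 3: "AE x in M. dlt j (\<lambda>_. 0) x = 0"
        by (rule dlt_meas[OF j(2) integrable_zero borel_measurable_const])
      from 1 2 3 show "AE x in M. dlt j X x = dlt j (\<lambda>_. 0) x" by eventually_elim simp
    qed
    then have "AE x in M. D i X x = D i (\<lambda>_. 0) x" by (rule D_cong_S[OF i X zero_LT])
    with z[OF i] show "AE x in M. D i X x = 0" by eventually_elim simp
  }
qed

lemma Linf_1m: "l \<in> Linf M G \<Longrightarrow> (\<lambda>x. 1 - l x) \<in> Linf M G"
proof -
  assume l: "l \<in> Linf M G"
  then obtain C where C: "AE x in M. \<bar>l x\<bar> \<le> C" unfolding Linf_def by auto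
  have g: "l \<in> borel_measurable G" using l unfolding Linf_def by simp
  have "AE x in M. \<bar>1 - l x\<bar> \<le> 1 + C" using C by eventually_elim arith
  moreover have "(\<lambda>x. 1 - l x) \<in> borel_measurable G" using g by measurable
  ultimately show ?thesis unfolding Linf_def by auto
qed

lemma ce_convex:
  assumes i: "i \<le> n" and t: "tt i \<le> t" "t \<le> T" and X: "X \<in> LT" and Y: "Y \<in> LT"
    and l: "l \<in> Linf M (F (tt i))"
  shows "AE x in M. E t (\<lambda>x. l x * X x + (1 - l x) * Y x) x = l x * E t X x + (1 - l x) * E t Y x"
proof -
  have a: "0 \<le> tt i" "tt i \<le> T" using tt_rng[OF i] by simp_all
  have t0: "0 \<le> t" using a t by simp
  have l1: "(\<lambda>x. 1 - l x) \<in> Linf M (F (tt i))" by (rule Linf_1m[OF l])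
  have lT: "l \<in> Linf M (F T)" by (rule Linf_le[OF a order_refl l])
  have l1T: "(\<lambda>x. 1 - l x) \<in> Linf M (F T)" by (rule Linf_le[OF a order_refl l1])
  have lX: "(\<lambda>x. l x * X x) \<in> LT" by (rule L2_mult_bdd[OF X lT saT])
  have lY: "(\<lambda>x. (1 - l x) * Y x) \<in> LT" by (rule L2_mult_bdd[OF Y l1T saT])
  have lgi: "l \<in> borel_measurable (F (tt i))" using l unfolding Linf_def by simp
  have lg: "l \<in> borel_measurable (F t)" by (rule meas_le[OF a(1) t lgi])
  have l1g: "(\<lambda>x. 1 - l x) \<in> borel_measurable (F t)" using lg by measurable
  have 1: "AE x in M. E t (\<lambda>x. l x * X x + (1 - l x) * Y x) x = E t (\<lambda>x. l x * X x) x + E t (\<lambda>x. (1 - l x) * Y x) x"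
    by (rule ce_add[where f="\<lambda>x. l x * X x" and g="\<lambda>x. (1 - l x) * Y x", OF t0 t(2) LT_int[OF lX] LT_int[OF lY]])
  have 2: "AE x in M. E t (\<lambda>x. l x * X x) x = l x * E t X x"
    by (rule ce_mult[where l=l and g=X, OF t0 t(2) lg LT_meas[OF X] LT_int[OF lX]])
  have 3: "AE x in M. E t (\<lambda>x. (1 - l x) * Y x) x = (1 - l x) * E t Y x"
    by (rule ce_mult[where l="\<lambda>x. 1 - l x" and g=Y, OF t0 t(2) l1g LT_meas[OF Y] LT_int[OF lY]])
  from 1 2 3 show ?thesis by eventually_elim simp
qed

lemma conv_LT:
  assumes i: "i \<le> n" and X: "X \<in> LT" and Y: "Y \<in> LT" and l: "l \<in> Linf M (F (tt i))"
  shows "(\<lambda>x. l x * X x + (1 - l x) * Y x) \<in> LT"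
proof -
  have a: "0 \<le> tt i" "tt i \<le> T" using tt_rng[OF i] by simp_all
  have lT: "l \<in> Linf M (F T)" by (rule Linf_le[OF a order_refl l])
  have l1T: "(\<lambda>x. 1 - l x) \<in> Linf M (F T)" by (rule Linf_le[OF a order_refl Linf_1m[OF l]])
  show ?thesis by (rule L2_add[OF L2_mult_bdd[OF X lT saT] L2_mult_bdd[OF Y l1T saT] saT])
qed

lemma bw_D3:
  assumes i: "i \<le> n"
  shows "D3 M (F T) (F (tt i)) (D i)"
  unfolding D3_def
proof (intro ballI impI)
  fix X Y l assume X: "X \<in> LT" and Y: "Y \<in> LT" and l: "l \<in> Linf M (F (tt i))"
    and l01: "AE x in M. 0 \<le> l x \<and> l x \<le> 1"
  have a: "0 \<le> tt i" "tt i \<le> T" using tt_rng[OF i] by simp_all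
  let ?Z = "\<lambda>x. l x * X x + (1 - l x) * Y x"
  have ZT: "?Z \<in> LT" by (rule conv_LT[OF i X Y l])
  have each: "AE x in M. \<forall>j\<in>{i..n}. Dt j (dlt j ?Z) x \<le> l x * Dt j (dlt j X) x + (1 - l x) * Dt j (dlt j Y) x"
  proof (rule AE_finite_allI[OF finite_atLeastAtMost])
    fix j assume "j \<in> {i..n}"
    then have j: "i \<le> j" "j \<le> n" by simp_all
    have r: "tt i \<le> tt j" "tt j \<le> nt j" "nt j \<le> T" "tt j \<le> T" "0 \<le> tt j"
      using tt_mono[OF j] nt_rng[OF j(2)] tt_rng[OF j(2)] by simp_all
    have c1: "AE x in M. E (nt j) ?Z x = l x * E (nt j) X x + (1 - l x) * E (nt j) Y x"
      by (rule ce_convex[OF i order_trans[OF r(1,2)] r(3) X Y l])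
    have c2: "AE x in M. E (tt j) ?Z x = l x * E (tt j) X x + (1 - l x) * E (tt j) Y x"
      by (rule ce_convex[OF i r(1) r(4) X Y l])
    have q: "AE x in M. dlt j ?Z x = l x * dlt j X x + (1 - l x) * dlt j Y x"
      using c1 c2 by eventually_elim (simp add: algebra_simps)
    have lj: "l \<in> Linf M (F (tt j))" by (rule Linf_le[OF a(1) r(1) r(4) l])
    have VT: "(\<lambda>x. l x * dlt j X x + (1 - l x) * dlt j Y x) \<in> LT"
      by (rule conv_LT[OF i dlt_LT[OF j(2) X] dlt_LT[OF j(2) Y] l])
    have e1: "AE x in M. Dt j (dlt j ?Z) x = Dt j (\<lambda>x. l x * dlt j X x + (1 - l x) * dlt j Y x) x"
      by (rule Lcong[OF lmt[OF j(2)] dlt_LT[OF j(2) ZT] VT q])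
    have d3': "\<forall>X\<in>LT. \<forall>Y\<in>LT. \<forall>l\<in>Linf M (F (tt j)).
        (AE \<omega> in M. 0 \<le> l \<omega> \<and> l \<omega> \<le> 1) \<longrightarrow>
        (AE \<omega> in M. Dt j (\<lambda>x. l x * X x + (1 - l x) * Y x) \<omega> \<le> l \<omega> * Dt j X \<omega> + (1 - l \<omega>) * Dt j Y \<omega>)"
      using dt3[OF j(2)] unfolding D3_def by simp
    have e2: "AE x in M. Dt j (\<lambda>x. l x * dlt j X x + (1 - l x) * dlt j Y x) x
        \<le> l x * Dt j (dlt j X) x + (1 - l x) * Dt j (dlt j Y) x"
      using d3'[rule_format, OF dlt_LT[OF j(2) X] dlt_LT[OF j(2) Y] lj l01] .
    from e1 e2 show "AE x in M. Dt j (dlt j ?Z) x \<le> l x * Dt j (dlt j X) x + (1 - l x) * Dt j (dlt j Y) x"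
      by eventually_elim simp
  qed
  have SZ: "AE x in M. S Dt i ?Z x \<le> l x * S Dt i X x + (1 - l x) * S Dt i Y x"
    using each
  proof eventually_elim
    case (elim x)
    have "S Dt i ?Z x \<le> (\<Sum>j\<in>{i..n}. l x * Dt j (dlt j X) x + (1 - l x) * Dt j (dlt j Y) x)"
      by (rule sum_mono) (use elim in simp)
    also have "\<dots> = l x * S Dt i X x + (1 - l x) * S Dt i Y x"
      by (simp add: sum.distrib sum_distrib_left)
    finally show ?case .
  qed
  have SXT: "S Dt i X \<in> LT" by (rule S_LT(1)[OF lmt X])
  have SYT: "S Dt i Y \<in> LT" by (rule S_LT(1)[OF lmt Y])
  have RT: "(\<lambda>x. l x * S Dt i X x + (1 - l x) * S Dt i Y x) \<in> LT" by (rule conv_LT[OF i SXT SYT l])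
  have m1: "AE x in M. E (tt i) (S Dt i ?Z) x \<le> E (tt i) (\<lambda>x. l x * S Dt i X x + (1 - l x) * S Dt i Y x) x"
    by (rule ce_mono[OF a SZ S_LT(2)[OF lmt ZT] LT_int[OF RT]])
  have m2: "AE x in M. E (tt i) (\<lambda>x. l x * S Dt i X x + (1 - l x) * S Dt i Y x) x
      = l x * E (tt i) (S Dt i X) x + (1 - l x) * E (tt i) (S Dt i Y) x"
    by (rule ce_convex[OF i order_refl a(2) SXT SYT l])
  from rep[OF i ZT] rep[OF i X] rep[OF i Y] m1 m2
  show "AE x in M. D i ?Z x \<le> l x * D i X x + (1 - l x) * D i Y x"
    by eventually_elim simp
qed

end

theorem proposition1:
  fixes M :: "'a measure" and F :: "real \<Rightarrow> 'a measure" and T :: real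
    and tt :: "nat \<Rightarrow> real" and n :: nat
    and D :: "nat \<Rightarrow> ('a \<Rightarrow> real) \<Rightarrow> ('a \<Rightarrow> real)"
  assumes "prob_space M"
    and "filtration M T F"
    and "0 \<le> tt 0" and "tt n \<le> T" and "\<And>i. i < n \<Longrightarrow> tt i < tt (Suc i)"
    and "\<And>i. i \<le> n \<Longrightarrow> L2_map M (F T) (F (tt i)) (D i)"
    and "\<And>i. i \<le> n \<Longrightarrow> AE \<omega> in M. D i (\<lambda>_. 0) \<omega> = 0"
  shows "(((\<forall>i \<le> n. D1 M (F T) (F (tt i)) (D i) \<and> D2 M (F T) (F (tt i)) (D i)
                    \<and> D3 M (F T) (F (tt i)) (D i)) \<and> D5 M F T tt n D)
         \<longleftrightarrow>
         (\<exists>Dt :: nat \<Rightarrow> ('a \<Rightarrow> real) \<Rightarrow> ('a \<Rightarrow> real).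
            (\<forall>i \<le> n. cond_conv_dev M (F T) (F (tt i)) (Dt i)) \<and>
            (\<forall>i \<le> n. \<forall>X \<in> L2 M (F T). AE \<omega> in M. D i X \<omega> =
               real_cond_exp M (F (tt i))
                 (\<lambda>x. \<Sum>j\<in>{i..n}. Dt j (\<lambda>y. real_cond_exp M (F (next_time tt n T j)) X y
                                            - real_cond_exp M (F (tt j)) X y) x) \<omega>)))
   \<and> (((\<forall>i \<le> n. D1 M (F T) (F (tt i)) (D i) \<and> D2 M (F T) (F (tt i)) (D i)
                    \<and> D3 M (F T) (F (tt i)) (D i)) \<and> D5 M F T tt n D)
         \<longrightarrow>
         (\<forall>i \<le> n. \<forall>X \<in> L2 M (F T). AE \<omega> in M. D i X \<omega> =
               real_cond_exp M (F (tt i))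
                 (\<lambda>x. \<Sum>j\<in>{i..n}. D j (\<lambda>y. real_cond_exp M (F (next_time tt n T j)) X y
                                            - real_cond_exp M (F (tt j)) X y) x) \<omega>))"
proof -
  have G: "grid M F T tt n"
  proof (rule grid.intro[OF assms(1)], rule grid_axioms.intro)
    show "filtration M T F" by (rule assms(2))
    show "0 \<le> tt 0" by (rule assms(3))
    show "tt n \<le> T" by (rule assms(4))
    show "\<And>i. i < n \<Longrightarrow> tt i < tt (Suc i)" by (rule assms(5))
  qed
  interpret grid M F T tt n by (rule G)
  have fw: "\<forall>i \<le> n. \<forall>X \<in> L2 M (F T). AE \<omega> in M. D i X \<omega> = E (tt i) (S D i X) \<omega>"
    if H: "(\<forall>i \<le> n. D1 M (F T) (F (tt i)) (D i) \<and> D2 M (F T) (F (tt i)) (D i)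
                    \<and> D3 M (F T) (F (tt i)) (D i)) \<and> D5 M F T tt n D"
  proof (intro allI impI ballI)
    fix i X assume i: "i \<le> n" and X: "X \<in> L2 M (F T)"
    have d1: "\<And>i. i \<le> n \<Longrightarrow> D1 M (F T) (F (tt i)) (D i)" using H by simp
    have d3: "\<And>i. i \<le> n \<Longrightarrow> D3 M (F T) (F (tt i)) (D i)" using H by simp
    have d5: "D5 M F T tt n D" using H by simp
    show "AE \<omega> in M. D i X \<omega> = E (tt i) (S D i X) \<omega>"
      by (rule fwd[OF assms(6) d1 d3 d5 i X])
  qed
  show ?thesis
  proof (rule conjI[OF iffI impI])
    assume H: "(\<forall>i \<le> n. D1 M (F T) (F (tt i)) (D i) \<and> D2 M (F T) (F (tt i)) (D i)
                    \<and> D3 M (F T) (F (tt i)) (D i)) \<and> D5 M F T tt n D"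
    show "\<forall>i \<le> n. \<forall>X \<in> L2 M (F T). AE \<omega> in M. D i X \<omega> = E (tt i) (S D i X) \<omega>"
      by (rule fw[OF H])
  next
    assume H: "(\<forall>i \<le> n. D1 M (F T) (F (tt i)) (D i) \<and> D2 M (F T) (F (tt i)) (D i)
                    \<and> D3 M (F T) (F (tt i)) (D i)) \<and> D5 M F T tt n D"
    have cd: "\<forall>i \<le> n. cond_conv_dev M (F T) (F (tt i)) (D i)"
      using H assms(6,7) unfolding cond_conv_dev_def by simp
    show "\<exists>Dt. (\<forall>i \<le> n. cond_conv_dev M (F T) (F (tt i)) (Dt i)) \<and>
            (\<forall>i \<le> n. \<forall>X \<in> L2 M (F T). AE \<omega> in M. D i X \<omega> = E (tt i) (S Dt i X) \<omega>)"
      using cd fw[OF H] by blast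
  next
    assume "\<exists>Dt. (\<forall>i \<le> n. cond_conv_dev M (F T) (F (tt i)) (Dt i)) \<and>
            (\<forall>i \<le> n. \<forall>X \<in> L2 M (F T). AE \<omega> in M. D i X \<omega> = E (tt i) (S Dt i X) \<omega>)"
    then obtain Dt where cd: "\<forall>i \<le> n. cond_conv_dev M (F T) (F (tt i)) (Dt i)"
      and rp: "\<forall>i \<le> n. \<forall>X \<in> L2 M (F T). AE \<omega> in M. D i X \<omega> = E (tt i) (S Dt i X) \<omega>"
      by blast
    have B: "bwd M F T tt n D Dt"
    proof (rule bwd.intro[OF G], rule bwd_axioms.intro)
      show "\<And>j. j \<le> n \<Longrightarrow> cond_conv_dev M (F T) (F (tt j)) (Dt j)" using cd by simp
      show "\<And>i. i \<le> n \<Longrightarrow> L2_map M (F T) (F (tt i)) (D i)" by (rule assms(6))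
      show "\<And>i. i \<le> n \<Longrightarrow> AE x in M. D i (\<lambda>_. 0) x = 0" by (rule assms(7))
      show "\<And>i X. i \<le> n \<Longrightarrow> X \<in> L2 M (F T) \<Longrightarrow> AE x in M. D i X x = E (tt i) (S Dt i X) x"
        using rp by simp
    qed
    interpret b: bwd M F T tt n D Dt by (rule B)
    show "(\<forall>i \<le> n. D1 M (F T) (F (tt i)) (D i) \<and> D2 M (F T) (F (tt i)) (D i)
                    \<and> D3 M (F T) (F (tt i)) (D i)) \<and> D5 M F T tt n D"
      using b.bw_D1 b.bw_D2 b.bw_D3 b.bw_D5 by simp
  qed
qed

end
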